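(* Fix $n\in\mathbb N$ and $\alpha\in(0,1)$, and let $S_1,\dots,S_M$ be pairwise disjoint measurable subsets of $\mathcal M_{\mathrm{free}}$ with $$\mu(S_m)=\mu(S_1)\ge\left(\frac{2+\log(1/\alpha)}{n}\right)e^2\,\mu(\mathcal M_{\mathrm{free}})\quad\text{for each } m.$$ Let $V$ be a set of $n$ points sampled independently and identically from the uniform distribution on $\mathcal M_{\mathrm{free}}$, and define $K_n:=\#\{m\in\{1,\dots,M\}: S_m\cap V=\emptyset\}$. Then $$\mathbb P(K_n\ge\alpha M)\le\frac{e^{-\alpha M}}{1-e^{-n}}.$$
   Context: $\mathcal M_{\mathrm{free}}\subset\mathbb R^n$ is a measurable set with $0<\mu(\mathcal M_{\mathrm{free}})<\infty$, where $\mu$ denotes Lebesgue measure. *)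

theory Defs
  imports "HOL-Probability.Probability"
begin

definition sample_space :: "nat \<Rightarrow> 'a::euclidean_space set \<Rightarrow> (nat \<Rightarrow> 'a) measure" where
  "sample_space n Mfree = PiM {..<n} (\<lambda>_. uniform_measure lebesgue Mfree)"

definition missed_count :: "nat \<Rightarrow> nat \<Rightarrow> (nat \<Rightarrow> 'a set) \<Rightarrow> (nat \<Rightarrow> 'a) \<Rightarrow> nat" where
  "missed_count n M S v = card {m \<in> {1..M}. S m \<inter> v ` {..<n} = {}}"

end

theory Submission
  imports Defs
begin

lemma kk_fact: "(real k) ^ k / fact k \<le> exp (real k)"
proof -
  have "(\<Sum>i\<in>{k}. real k ^ i /\<^sub>R fact i) \<le> (\<Sum>i. real k ^ i /\<^sub>R fact i)"
    by (rule sum_le_suminf) (auto intro: summable_exp)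
  then show ?thesis using sums_unique[OF exp_converges, of "real k"]
    by (simp add: divide_inverse_commute)
qed

lemma real_bound:
  fixes \<alpha> p :: real and n M k :: nat
  assumes "0 < \<alpha>" "\<alpha> < 1" "k = nat \<lceil>\<alpha> * M\<rceil>" "0 \<le> 1 - k * p"
    and "k > 0 \<Longrightarrow> p * n \<ge> (2 + ln (1/\<alpha>)) * exp 2" "n \<ge> 1"
  shows "real (M choose k) * (1 - k * p) ^ n \<le> exp (- \<alpha> * real M) / (1 - exp (- real n))"
proof -
  define L where "L = ln (1/\<alpha>)"
  have L0: "L \<ge> 0" using assms unfolding L_def by simp
  have aM: "\<alpha> * M \<le> M" using assms(1,2) by (intro mult_left_le_one_le) auto
  hence kM: "k \<le> M" using assms(3) by (simp add: nat_le_iff ceiling_le_iff)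
  have kge: "real k \<ge> \<alpha> * M" using assms(3) by (simp add: real_nat_ceiling_ge)
  have d: "0 < 1 - exp (- real n)" "1 - exp (- real n) \<le> 1" using assms by auto
  have main: "real (M choose k) * (1 - k * p) ^ n \<le> exp (- real k)"
  proof (cases "k = 0")
    case True then show ?thesis by simp
  next
    case False
    hence pn: "p * n \<ge> (2 + L) * exp 2" using assms L_def by auto
    have c: "(2 + L) * exp 2 \<ge> 2 + L" using L0 by (simp add: mult_le_cancel_left1 one_le_exp_iff)
    have "(1 - k * p) ^ n \<le> exp (- k * p) ^ n"
      using assms(4) exp_ge_add_one_self[of "- k * p"] by (intro power_mono) auto
    also have "\<dots> = exp (- k * (p * n))" by (simp add: exp_of_nat_mult[symmetric] algebra_simps)
    also have "\<dots> \<le> exp (- k * (2 + L))"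
      using pn c by (simp add: mult_left_mono)
    finally have A: "(1 - k * p) ^ n \<le> exp (- k * (2 + L))" .
    have pw: "(1/\<alpha>)^k = exp (k * L)" using assms(1) by (simp add: L_def exp_of_nat_mult)
    have "real (M choose k) \<le> real M ^ k / fact k"
      using binomial_fact_pow[of M k] by (simp add: field_simps) (metis of_nat_fact of_nat_le_iff of_nat_mult of_nat_power)
    also have "\<dots> \<le> (k / \<alpha>) ^ k / fact k"
      using kge assms(1) by (intro divide_right_mono power_mono) (auto simp: field_simps)
    also have "\<dots> = (1/\<alpha>) ^ k * (real k ^ k / fact k)" by (simp add: field_simps power_divide)
    also have "\<dots> \<le> (1/\<alpha>) ^ k * exp k" using kk_fact assms(1) by (intro mult_left_mono) auto
    also have "\<dots> = exp (k * (L + 1))"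
      using pw by (simp add: exp_add distrib_left)
    finally have B: "real (M choose k) \<le> exp (k * (L + 1))" .
    have "real (M choose k) * (1 - k * p) ^ n \<le> exp (k * (L + 1)) * exp (- k * (2 + L))"
      using A B assms(4) by (intro mult_mono) auto
    also have "\<dots> = exp (- real k)" by (simp add: exp_add[symmetric] algebra_simps)
    finally show ?thesis .
  qed
  also have "\<dots> \<le> exp (- \<alpha> * real M)" using kge by simp
  also have "\<dots> \<le> exp (- \<alpha> * real M) / (1 - exp (- real n))"
    using d by (simp add: le_divide_eq)
  finally show ?thesis .
qed

lemma lemma4_aux:
  fixes Mfree :: "'a::euclidean_space set"
    and S :: "nat \<Rightarrow> 'a set"
    and n M :: nat and \<alpha> :: real
  assumes "Mfree \<in> sets lebesgue"
    and "0 < emeasure lebesgue Mfree" and "emeasure lebesgue Mfree < \<infinity>"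
    and "n \<ge> 1"
    and "0 < \<alpha>" and "\<alpha> < 1"
    and "\<And>m. m \<in> {1..M} \<Longrightarrow> S m \<in> sets lebesgue"
    and "\<And>m. m \<in> {1..M} \<Longrightarrow> S m \<subseteq> Mfree"
    and "disjoint_family_on S {1..M}"
    and "\<And>m. m \<in> {1..M} \<Longrightarrow> measure lebesgue (S m) = measure lebesgue (S 1)"
    and "\<And>m. m \<in> {1..M} \<Longrightarrow>
           measure lebesgue (S m) \<ge> ((2 + ln (1 / \<alpha>)) / real n) * exp 2 * measure lebesgue Mfree"
  shows "measure (sample_space n Mfree)
           {v \<in> space (sample_space n Mfree). real (missed_count n M S v) \<ge> \<alpha> * real M}
         \<le> exp (- \<alpha> * real M) / (1 - exp (- real n))"
proof -
  define u where "u = uniform_measure lebesgue Mfree"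
  define P where "P = sample_space n Mfree"
  define mu where "mu = measure lebesgue Mfree"
  define p where "p = measure lebesgue (S 1) / mu"
  define k where "k = nat \<lceil>\<alpha> * M\<rceil>"
  define U where "U T = (\<Union>m\<in>T. S m)" for T
  define A where "A T = PiE {..<n} (\<lambda>_. - U T)" for T
  define Ts where "Ts = {T. T \<subseteq> {1..M} \<and> card T = k}"
  have e0: "emeasure lebesgue Mfree \<noteq> 0" "emeasure lebesgue Mfree \<noteq> \<infinity>" using assms(2,3) by auto
  have mu0: "mu > 0" using assms(2,3) unfolding mu_def
    by (simp add: measure_def enn2real_positive_iff)
  interpret u: prob_space u unfolding u_def by (rule prob_space_uniform_measure[OF e0])
  have Pdef: "P = PiM {..<n} (\<lambda>_. u)" unfolding P_def u_def sample_space_def ..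
  interpret P: prob_space P unfolding Pdef by (rule prob_space_PiM) (rule u.prob_space_axioms)
  have su: "sets u = sets lebesgue" "space u = UNIV" unfolding u_def by auto
  have mS: "measure u (S m) = p" if "m \<in> {1..M}" for m
  proof -
    have "measure u (S m) = measure lebesgue (Mfree \<inter> S m) / mu"
      unfolding u_def mu_def using e0 assms(7)[OF that] by simp
    also have "Mfree \<inter> S m = S m" using assms(8)[OF that] by auto
    finally show ?thesis using assms(10)[OF that] by (simp add: p_def)
  qed
  have UT: "U T \<in> sets lebesgue" "measure u (U T) = card T * p" if "T \<subseteq> {1..M}" for T
  proof -
    have fT: "finite T" using finite_subset[OF that] by simp
    show "U T \<in> sets lebesgue" unfolding U_def using fT that assms(7) by (intro sets.finite_UN) auto
    have "measure u (U T) = (\<Sum>m\<in>T. measure u (S m))" unfolding U_def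
      using fT that assms(7,9) su by (intro u.finite_measure_finite_Union) (auto intro: disjoint_family_on_mono)
    also have "\<dots> = card T * p" using mS that by (simp add: subset_iff)
    finally show "measure u (U T) = card T * p" .
  qed
  have cU: "measure u (- U T) = 1 - card T * p" "- U T \<in> sets u" if "T \<subseteq> {1..M}" for T
  proof -
    have "- U T = space u - U T" using su by auto
    thus "measure u (- U T) = 1 - card T * p" using u.prob_compl[of "U T"] UT[OF that] su by simp
    show "- U T \<in> sets u" using UT(1)[OF that] su sets.compl_sets[of "U T" lebesgue] by (simp add: Compl_eq_Diff_UNIV)
  qed
  have AT: "A T \<in> sets P" "measure P (A T) = (1 - card T * p) ^ n" if "T \<subseteq> {1..M}" for T
  proof -
    show "A T \<in> sets P" unfolding A_def Pdef using cU[OF that] by (intro sets_PiM_I_finite) auto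
    have "emeasure P (prod_emb {..<n} (\<lambda>_. u) {..<n} (A T)) = (\<Prod>i\<in>{..<n}. emeasure u (- U T))"
      unfolding Pdef A_def using cU[OF that] by (intro emeasure_PiM_emb) (auto intro: u.prob_space_axioms)
    moreover have "prod_emb {..<n} (\<lambda>_. u) {..<n} (A T) = A T" unfolding A_def
      by (rule prod_emb_id) (auto simp: su)
    ultimately have "emeasure P (A T) = emeasure u (- U T) ^ n" by simp
    thus "measure P (A T) = (1 - card T * p) ^ n"
      using cU[OF that] measure_nonneg[of u "- U T"] by (simp add: P.emeasure_eq_measure u.emeasure_eq_measure ennreal_power)
  qed
  have aM: "\<alpha> * M \<le> M" using assms(5,6) by (intro mult_left_le_one_le) auto
  hence kM: "k \<le> M" unfolding k_def by (simp add: nat_le_iff ceiling_le_iff)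
  have sub: "{v \<in> space P. real (missed_count n M S v) \<ge> \<alpha> * real M} \<subseteq> (\<Union>T\<in>Ts. A T)"
  proof
    fix v assume v: "v \<in> {v \<in> space P. real (missed_count n M S v) \<ge> \<alpha> * real M}"
    define Z where "Z = {m \<in> {1..M}. S m \<inter> v ` {..<n} = {}}"
    have cz: "\<alpha> * M \<le> real (card Z)" using v unfolding Z_def missed_count_def by simp
    have "card Z \<ge> k" unfolding k_def using cz by (simp add: nat_le_iff ceiling_le_iff)
    then obtain T where T: "T \<subseteq> Z" "card T = k" by (meson obtain_subset_with_card_n)
    have vs: "v \<in> PiE {..<n} (\<lambda>_. UNIV)" using v by (simp add: Pdef space_PiM su)
    have "v i \<in> - U T" if "i \<in> {..<n}" for i
    proof -
      have "v i \<notin> S m" if "m \<in> T" for m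
      proof -
        have "S m \<inter> v ` {..<n} = {}" using T(1) \<open>m \<in> T\<close> unfolding Z_def by blast
        thus ?thesis using \<open>i \<in> {..<n}\<close> by blast
      qed
      thus ?thesis unfolding U_def by blast
    qed
    hence "v \<in> A T" using vs unfolding A_def by (auto simp: PiE_iff)
    moreover have "T \<in> Ts" using T unfolding Ts_def Z_def by auto
    ultimately show "v \<in> (\<Union>T\<in>Ts. A T)" by blast
  qed
  have fTs: "finite Ts" unfolding Ts_def by (rule finite_subset[of _ "Pow {1..M}"]) auto
  have cTs: "card Ts = M choose k" unfolding Ts_def using n_subsets[of "{1..M}" k] by simp
  have "measure P {v \<in> space P. real (missed_count n M S v) \<ge> \<alpha> * real M} \<le> measure P (\<Union>T\<in>Ts. A T)"
    using sub fTs AT by (intro P.finite_measure_mono) (auto simp: Ts_def)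
  also have "\<dots> \<le> (\<Sum>T\<in>Ts. measure P (A T))"
    using fTs AT by (intro P.finite_measure_subadditive_finite) (auto simp: Ts_def)
  also have "\<dots> = (\<Sum>T\<in>Ts. (1 - k * p) ^ n)" using AT by (intro sum.cong) (auto simp: Ts_def)
  also have "\<dots> = real (M choose k) * (1 - k * p) ^ n" using cTs by simp
  also have "\<dots> \<le> exp (- \<alpha> * real M) / (1 - exp (- real n))"
  proof (rule real_bound[OF assms(5,6) k_def _ _ assms(4)])
    obtain T where T: "T \<subseteq> {1..M}" "card T = k" using kM by (metis obtain_subset_with_card_n card_atLeastAtMost diff_Suc_1)
    show "0 \<le> 1 - k * p" using cU(1)[OF T(1)] T(2) measure_nonneg[of u "- U T"] by simp
    assume "k > 0"
    hence "1 \<in> {1..M}" using kM by auto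
    from assms(11)[OF this] have "(2 + ln (1 / \<alpha>)) / real n * exp 2 * mu \<le> p * mu"
      using mu0 by (simp add: p_def mu_def)
    hence "(2 + ln (1 / \<alpha>)) / real n * exp 2 \<le> p" by (rule mult_right_le_imp_le[OF _ mu0])
    thus "(2 + ln (1 / \<alpha>)) * exp 2 \<le> p * n" using assms(4) by (simp add: field_simps)
  qed
  finally show ?thesis unfolding P_def .
qed

theorem lemma4:
  fixes Mfree :: "'a::euclidean_space set"
    and S :: "nat \<Rightarrow> 'a set"
    and n M :: nat and \<alpha> :: real
  assumes "Mfree \<in> sets lebesgue"
    and "0 < emeasure lebesgue Mfree" and "emeasure lebesgue Mfree < \<infinity>"
    and "n \<ge> 1"
    and "0 < \<alpha>" and "\<alpha> < 1"
    and "\<And>m. m \<in> {1..M} \<Longrightarrow> S m \<in> sets lebesgue"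
    and "\<And>m. m \<in> {1..M} \<Longrightarrow> S m \<subseteq> Mfree"
    and "disjoint_family_on S {1..M}"
    and "\<And>m. m \<in> {1..M} \<Longrightarrow> measure lebesgue (S m) = measure lebesgue (S 1)"
    and "\<And>m. m \<in> {1..M} \<Longrightarrow>
           measure lebesgue (S m) \<ge> ((2 + ln (1 / \<alpha>)) / real n) * exp 2 * measure lebesgue Mfree"
  shows "measure (sample_space n Mfree)
           {v \<in> space (sample_space n Mfree). real (missed_count n M S v) \<ge> \<alpha> * real M}
         \<le> exp (- \<alpha> * real M) / (1 - exp (- real n))"
  using assms by (rule lemma4_aux)

end
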